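(* Let $s,t\in\mathbb N$, $d=\gcd(s,t)$, $m=\mathrm{lcm}(s,t)$. Let $\sigma$ be an $s$-core and $\tau$ a $t$-core with $\mathrm{core}_d(\sigma)=\mathrm{core}_d(\tau)$, and put $\ell_0=\max(\ell(\sigma),\ell(\tau))$. Then for each integer $i\ge\ell_0$ and each $0\le j<d$ there exist an $\frac sd$-core $\sigma^i_j$, a $\frac td$-core $\tau^i_j$ and a nonnegative integer $\ell^i_j$ such that for all integers $k\ge0$, $$N_{\sigma,\tau}(i+mk)=\prod_{j=0}^{d-1}N_{\sigma^i_j,\tau^i_j}\!\left(\ell^i_j+\tfrac md k\right).$$
   Context: A partition $\lambda=(a_1,\dots,a_\ell)$ is a weakly decreasing finite sequence of positive integers; $\ell(\lambda)=\ell$ is its length. For $t\in\mathbb N$, a $t$-core is a partition whose Young diagram has no hook of size $t$; $\mathcal C_t$ is the set of $t$-cores; $\mathrm{core}_t\lambda$ is obtained from $\lambda$ by successively removing rim hooks (border strips) of size $t$ until none remain. For positive integers $u,v$, a $u$-core $\alpha$, a $v$-core $\gamma$ and an integer $k\ge0$, $N_{\alpha,\gamma}(k)=\#\{\lambda\in\mathcal C_{\mathrm{lcm}(u,v)}:\mathrm{core}_u\lambda=\alpha,\ \mathrm{core}_v\lambda=\gamma,\ \ell(\lambda)\le k\}$. (On the left side $u=s$, $v=t$; on the right side $u=s/d$, $v=t/d$, so $\mathrm{lcm}(u,v)=m/d$.) *)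

theory Defs
  imports Main
begin

definition partition :: "nat list \<Rightarrow> bool" where
  "partition lam \<longleftrightarrow> (\<forall>x\<in>set lam. 0 < x) \<and> sorted_wrt (\<ge>) lam"

definition diagram :: "nat list \<Rightarrow> (nat \<times> nat) set" where
  "diagram lam = {(i, j). i < length lam \<and> j < lam ! i}"

definition conj_part :: "nat list \<Rightarrow> nat \<Rightarrow> nat" where
  "conj_part lam j = length (filter (\<lambda>x. j < x) lam)"

definition hook_len :: "nat list \<Rightarrow> nat \<Rightarrow> nat \<Rightarrow> nat" where
  "hook_len lam i j = (lam ! i - j - 1) + (conj_part lam j - i - 1) + 1"

definition is_core :: "nat \<Rightarrow> nat list \<Rightarrow> bool" where
  "is_core t lam \<longleftrightarrow> partition lam \<and> (\<forall>(i, j)\<in>diagram lam. hook_len lam i j \<noteq> t)"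

definition cell_adj :: "nat \<times> nat \<Rightarrow> nat \<times> nat \<Rightarrow> bool" where
  "cell_adj a b \<longleftrightarrow> (fst a = fst b \<and> (snd a = Suc (snd b) \<or> snd b = Suc (snd a)))
                   \<or> (snd a = snd b \<and> (fst a = Suc (fst b) \<or> fst b = Suc (fst a)))"

definition cells_connected :: "(nat \<times> nat) set \<Rightarrow> bool" where
  "cells_connected S \<longleftrightarrow>
     (\<forall>a\<in>S. \<forall>b\<in>S. (\<lambda>x y. x \<in> S \<and> y \<in> S \<and> cell_adj x y)\<^sup>*\<^sup>* a b)"

definition no_2x2 :: "(nat \<times> nat) set \<Rightarrow> bool" where
  "no_2x2 S \<longleftrightarrow> \<not> (\<exists>i j. (i, j) \<in> S \<and> (Suc i, j) \<in> S \<and> (i, Suc j) \<in> S \<and> (Suc i, Suc j) \<in> S)"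

definition removes_rim_hook :: "nat \<Rightarrow> nat list \<Rightarrow> nat list \<Rightarrow> bool" where
  "removes_rim_hook t lam \<mu> \<longleftrightarrow> partition \<mu> \<and> diagram \<mu> \<subseteq> diagram lam \<and>
     (let S = diagram lam - diagram \<mu> in
        S \<noteq> {} \<and> card S = t \<and> cells_connected S \<and> no_2x2 S)"

definition core :: "nat \<Rightarrow> nat list \<Rightarrow> nat list" where
  "core t lam = (THE \<mu>. (removes_rim_hook t)\<^sup>*\<^sup>* lam \<mu> \<and> is_core t \<mu>)"

definition N_count :: "nat \<Rightarrow> nat \<Rightarrow> nat list \<Rightarrow> nat list \<Rightarrow> nat \<Rightarrow> nat" where
  "N_count u v \<alpha> \<gamma> k = card {lam. is_core (lcm u v) lam \<and> core u lam = \<alpha> \<and> core v lam = \<gamma>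
                               \<and> length lam \<le> k}"

end

theory Submission
  imports Defs "HOL-Library.FuncSet"
begin


definition part :: "nat list \<Rightarrow> nat \<Rightarrow> nat" where
  "part lam r = (if r < length lam then lam ! r else 0)"

lemma partition_antitone:
  assumes "partition lam" "r \<le> r'" shows "part lam r' \<le> part lam r"
  using assms unfolding partition_def part_def sorted_wrt_iff_nth_less
  by (auto simp: le_less)

lemma partition_pos: "partition lam \<Longrightarrow> r < length lam \<Longrightarrow> 0 < part lam r"
  unfolding partition_def part_def by auto

lemma part_pos_iff: "partition lam \<Longrightarrow> 0 < part lam r \<longleftrightarrow> r < length lam"
  using partition_pos[of lam r] by (auto simp: part_def)

lemma part_ge_len: "length lam \<le> r \<Longrightarrow> part lam r = 0"
  by (simp add: part_def)

lemma diagram_part: "diagram lam = {(r, c). c < part lam r}"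
  unfolding diagram_def part_def by (auto split: if_splits)

lemma conj_part_eq: "conj_part lam c = card {r. c < part lam r}"
proof -
  have "conj_part lam c = length (filter (\<lambda>x. c < x) lam)" by (simp add: conj_part_def)
  also have "\<dots> = card {r. r < length lam \<and> c < lam ! r}" by (simp add: length_filter_conv_card)
  also have "{r. r < length lam \<and> c < lam ! r} = {r. c < part lam r}" by (auto simp: part_def split: if_splits)
  finally show ?thesis .
qed

lemma antitone_set_eq:
  fixes f :: "nat \<Rightarrow> nat"
  assumes "\<And>r r'. r \<le> r' \<Longrightarrow> f r' \<le> f r" "\<And>r. N \<le> r \<Longrightarrow> f r \<le> c"
  shows "{r. c < f r} = {..<card {r. c < f r}}"
proof -
  have fin: "finite {r. c < f r}"
    by (rule finite_subset[of _ "{..<N}"]) (auto, metis assms(2) not_le leD)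
  have down: "r \<in> {r. c < f r} \<Longrightarrow> r' \<le> r \<Longrightarrow> r' \<in> {r. c < f r}" for r r'
    using assms(1)[of r' r] by auto
  show ?thesis
  proof -
    define S where "S = {r. c < f r}"
    have "S = {..<card S}"
    proof (cases "S = {}")
      case True then show ?thesis by simp
    next
      case False
      let ?M = "Max S"
      have "?M \<in> S" using False fin S_def by (intro Max_in) auto
      have "S = {..?M}"
      proof (intro set_eqI iffI)
        fix x assume "x \<in> S" then show "x \<in> {..?M}" using fin S_def Max_ge[of S x] by simp
      next
        fix x assume "x \<in> {..?M}" then show "x \<in> S" using down[of ?M x] \<open>?M \<in> S\<close> S_def by simp
      qed
      then show ?thesis by (metis card_atMost lessThan_Suc_atMost)
    qed
    then show ?thesis by (simp add: S_def)
  qed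
qed

lemma conj_part_char:
  assumes "partition lam"
  shows "c < part lam r \<longleftrightarrow> r < conj_part lam c"
proof -
  have "{r. c < part lam r} = {..<card {r. c < part lam r}}"
    by (rule antitone_set_eq[where N="length lam"]) (auto simp: partition_antitone[OF assms] part_ge_len)
  then show ?thesis by (metis conj_part_eq lessThan_iff mem_Collect_eq)
qed

lemma conj_part_le: "conj_part lam c \<le> length lam"
  unfolding conj_part_def by simp

lemma hook_len_part: "(i, j) \<in> diagram lam \<Longrightarrow> partition lam \<Longrightarrow>
  hook_len lam i j = part lam i - j + conj_part lam j - i - 1"
  unfolding hook_len_def diagram_part using conj_part_char[of lam j i]
  by (auto simp: part_def split: if_splits)



definition anti :: "(nat \<Rightarrow> nat) \<Rightarrow> bool" where
  "anti p \<longleftrightarrow> (\<forall>r r'. r \<le> r' \<longrightarrow> p r' \<le> p r)"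

definition bd :: "nat \<Rightarrow> (nat \<Rightarrow> nat) \<Rightarrow> nat \<Rightarrow> nat" where
  "bd L p r = p r + (L - 1 - r)"

definition beads :: "nat \<Rightarrow> (nat \<Rightarrow> nat) \<Rightarrow> nat set" where
  "beads L p = bd L p ` {..<L}"

lemma anti_part: "partition lam \<Longrightarrow> anti (part lam)"
  unfolding anti_def using partition_antitone by blast

lemma antiD: "anti p \<Longrightarrow> r \<le> r' \<Longrightarrow> p r' \<le> p r"
  unfolding anti_def by blast

lemma anti_Suc: "(\<And>r. p (Suc r) \<le> p r) \<Longrightarrow> anti p"
  unfolding anti_def by (metis antimono_iff_le_Suc antimono_def)

lemma bd_gap: "anti p \<Longrightarrow> r \<le> r' \<Longrightarrow> r' < L \<Longrightarrow> bd L p r' + (r' - r) \<le> bd L p r"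
  unfolding bd_def using antiD[of p r r'] by simp

lemma bd_less: "anti p \<Longrightarrow> r < r' \<Longrightarrow> r' < L \<Longrightarrow> bd L p r' < bd L p r"
  using bd_gap[of p r r' L] by simp

lemma bd_inj: "anti p \<Longrightarrow> inj_on (bd L p) {..<L}"
  unfolding inj_on_def by (metis bd_less lessThan_iff linorder_neqE_nat less_irrefl)

lemma card_beads: "anti p \<Longrightarrow> card (beads L p) = L"
  unfolding beads_def using bd_inj card_image by fastforce

lemma finite_beads[simp]: "finite (beads L p)"
  unfolding beads_def by simp

lemma sum_beads: "anti p \<Longrightarrow> \<Sum>(beads L p) = (\<Sum>r<L. p r) + (\<Sum>r<L. L - 1 - r)"
proof -
  assume a: "anti p"
  have "\<Sum>(beads L p) = (\<Sum>r<L. bd L p r)"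
    unfolding beads_def by (subst sum.reindex[OF bd_inj[OF a]]) simp
  also have "\<dots> = (\<Sum>r<L. p r) + (\<Sum>r<L. L - 1 - r)"
    by (simp only: bd_def sum.distrib)
  finally show ?thesis .
qed

lemma card_diagram: "length lam \<le> L \<Longrightarrow> card (diagram lam) = (\<Sum>r<L. part lam r)"
proof -
  assume L: "length lam \<le> L"
  have "diagram lam = Sigma {..<L} (\<lambda>r. {..<part lam r})"
    using L by (auto simp: diagram_part part_def split: if_splits)
  then show ?thesis by (simp add: card_SigmaI)
qed

lemma bd_above: "anti p \<Longrightarrow> r < L \<Longrightarrow> {x \<in> beads L p. bd L p r < x} = bd L p ` {..<r}"
proof (intro set_eqI iffI)
  fix x assume a: "anti p" "r < L" and x: "x \<in> {x \<in> beads L p. bd L p r < x}"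
  then obtain r' where r': "r' < L" "x = bd L p r'" "bd L p r < bd L p r'" by (auto simp: beads_def)
  have "r' < r" using r' bd_less[OF a(1), of r r' L] by (metis less_asym linorder_neqE_nat)
  then show "x \<in> bd L p ` {..<r}" using r' by auto
next
  fix x assume a: "anti p" "r < L" and x: "x \<in> bd L p ` {..<r}"
  then obtain r' where r': "r' < r" "x = bd L p r'" by auto
  then show "x \<in> {x \<in> beads L p. bd L p r < x}" using a bd_less[OF a(1), of r' r L] by (auto simp: beads_def)
qed

lemma card_bd_above: "anti p \<Longrightarrow> r < L \<Longrightarrow> card {x \<in> beads L p. bd L p r < x} = r"
  apply (simp add: bd_above)
  apply (subst card_image)
  using bd_inj[of p L] by (auto intro: inj_on_subset)

lemma beads_inj:
  assumes p: "anti p" and q: "anti q" and p0: "\<And>r. L \<le> r \<Longrightarrow> p r = 0"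
    and q0: "\<And>r. L \<le> r \<Longrightarrow> q r = 0" and eq: "beads L p = beads L q"
  shows "p = q"
proof
  fix r
  show "p r = q r"
  proof (cases "r < L")
    case False then show ?thesis using p0 q0 by simp
  next
    case True
    let ?I = "beads L p"
    have a: "bd L p r \<in> ?I" "bd L q r \<in> ?I" using True eq unfolding beads_def by auto
    have ca: "card {x \<in> ?I. bd L p r < x} = r" using card_bd_above[OF p True] .
    have cb: "card {x \<in> ?I. bd L q r < x} = r" using card_bd_above[OF q True] eq by simp
    have key: "a < b \<Longrightarrow> a \<in> ?I \<Longrightarrow> b \<in> ?I \<Longrightarrow> card {x \<in> ?I. b < x} < card {x \<in> ?I. a < x}" for a b
      by (rule psubset_card_mono) auto
    have "bd L p r = bd L q r"
      using key[OF _ a] key[OF _ a(2) a(1)] ca cb by (metis less_irrefl linorder_neqE_nat)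
    then show ?thesis by (simp add: bd_def)
  qed
qed

lemma partition_eqI:
  assumes "partition lam" "partition mu" "part lam = part mu" shows "lam = mu"
proof -
  have "length lam = length mu"
    using part_pos_iff[OF assms(1)] part_pos_iff[OF assms(2)] assms(3)
    by (metis linorder_neqE_nat less_irrefl)
  then show ?thesis using assms(3)
    by (metis nth_equalityI part_def)
qed

lemma of_fun:
  assumes "anti q" "\<And>r. L \<le> r \<Longrightarrow> q r = 0"
  shows "\<exists>mu. partition mu \<and> part mu = q \<and> length mu \<le> L"
proof -
  define n where "n = card {r. 0 < q r}"
  have S: "{r. 0 < q r} = {..<n}" unfolding n_def
    by (rule antitone_set_eq[where N=L]) (use assms in \<open>auto dest: antiD\<close>)
  have nL: "n \<le> L" using S assms(2) by (metis lessThan_iff mem_Collect_eq not_le less_irrefl gr0I)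
  define mu where "mu = map q [0..<n]"
  have "part mu = q"
  proof
    fix r show "part mu r = q r"
    proof (cases "r < n")
      case True then show ?thesis by (simp add: mu_def part_def)
    next
      case False
      then have "r \<notin> {r. 0 < q r}" using S by simp
      then show ?thesis using False by (simp add: mu_def part_def)
    qed
  qed
  moreover have "partition mu"
    unfolding partition_def sorted_wrt_iff_nth_less
  proof (intro conjI ballI allI impI)
    fix x assume "x \<in> set mu"
    then obtain r where "r < n" "x = q r" by (auto simp: mu_def)
    then show "0 < x" using S by (metis lessThan_iff mem_Collect_eq)
  next
    fix i j assume "i < j" "j < length mu"
    then show "mu ! j \<le> mu ! i" by (simp add: mu_def antiD[OF assms(1)])
  qed
  ultimately show ?thesis using nL by (auto simp: mu_def)
qed

lemma part0: "length lam \<le> L \<Longrightarrow> L \<le> r \<Longrightarrow> part lam r = 0"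
  by (simp add: part_def)

lemma beads_exist:
  "finite X \<Longrightarrow> card X = L \<Longrightarrow> \<exists>lam. partition lam \<and> length lam \<le> L \<and> beads L (part lam) = X"
proof (induction L arbitrary: X)
  case 0
  then show ?case by (intro exI[of _ "[]"]) (auto simp: partition_def beads_def)
next
  case (Suc L)
  define M where "M = Max X"
  have ne: "X \<noteq> {}" using Suc.prems by auto
  have MX: "M \<in> X" using Suc.prems ne by (simp add: M_def)
  have Mge: "x \<in> X \<Longrightarrow> x \<le> M" for x using Suc.prems by (simp add: M_def)
  obtain lam where lam: "partition lam" "length lam \<le> L" "beads L (part lam) = X - {M}"
    using Suc.IH[of "X - {M}"] Suc.prems MX by auto
  have hML: "L \<le> M \<and> part lam 0 \<le> M - L"
  proof (cases L)
    case 0 then show ?thesis using lam(2) by (simp add: part_def)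
  next
    case (Suc L')
    have "bd L (part lam) 0 \<in> X - {M}" using lam(3) Suc unfolding beads_def by auto
    then have "bd L (part lam) 0 < M" using Mge by force
    then show ?thesis using Suc by (simp add: bd_def)
  qed
  define q where "q r = (if r = 0 then M - L else part lam (r - 1))" for r
  have aq: "anti q"
  proof (rule anti_Suc)
    fix r show "q (Suc r) \<le> q r"
    proof (cases r)
      case 0 then show ?thesis using hML by (simp add: q_def)
    next
      case (Suc r') then show ?thesis using antiD[OF anti_part[OF lam(1)], of r' "Suc r'"] by (simp add: q_def)
    qed
  qed
  have q0: "Suc L \<le> r \<Longrightarrow> q r = 0" for r using lam(2) by (auto simp: q_def part_def)
  obtain mu where mu: "partition mu" "part mu = q" "length mu \<le> Suc L" using of_fun[OF aq q0] by blast
  have "beads (Suc L) q = insert (bd (Suc L) q 0) (bd (Suc L) q ` Suc ` {..<L})"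
    unfolding beads_def lessThan_Suc_eq_insert_0 by (simp add: image_image)
  also have "bd (Suc L) q 0 = M" using hML by (simp add: bd_def q_def)
  also have "bd (Suc L) q ` Suc ` {..<L} = beads L (part lam)"
    unfolding beads_def image_image by (intro image_cong) (auto simp: bd_def q_def)
  finally have "beads (Suc L) q = X" using lam(3) MX by auto
  then show ?case using mu by auto
qed

lemma beads_shift:
  assumes "\<And>r. L \<le> r \<Longrightarrow> p r = 0"
  shows "beads (L + c) p = (\<lambda>x. x + c) ` beads L p \<union> {..<c}"
proof -
  have "{..<L + c} = {..<L} \<union> {L..<L+c}" by auto
  then have "beads (L + c) p = bd (L + c) p ` {..<L} \<union> bd (L + c) p ` {L..<L+c}"
    unfolding beads_def by auto
  also have "bd (L + c) p ` {..<L} = (\<lambda>x. x + c) ` beads L p"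
    unfolding beads_def image_image by (intro image_cong) (auto simp: bd_def)
  also have "bd (L + c) p ` {L..<L+c} = {..<c}"
  proof -
    have "bd (L + c) p ` {L..<L+c} = (\<lambda>r. L + c - 1 - r) ` {L..<L+c}"
      by (intro image_cong) (auto simp: bd_def assms)
    also have "\<dots> = {..<c}"
    proof (intro set_eqI iffI)
      fix x assume "x \<in> {..<c}"
      then show "x \<in> (\<lambda>r. L + c - 1 - r) ` {L..<L+c}"
        by (intro image_eqI[of _ _ "L + c - 1 - x"]) auto
    qed auto
    finally show ?thesis .
  qed
  finally show ?thesis .
qed



definition closed :: "nat \<Rightarrow> nat set \<Rightarrow> bool" where
  "closed t X \<longleftrightarrow> (\<forall>x\<in>X. t \<le> x \<longrightarrow> x - t \<in> X)"

lemma len_le_L_part: "partition lam \<Longrightarrow> length lam \<le> L \<Longrightarrow> 0 < part lam r \<Longrightarrow> r < L"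
  using part_pos_iff by fastforce

lemma hook_fwd:
  assumes lam: "partition lam" "length lam \<le> L" and ij: "(i, j) \<in> diagram lam"
  shows "\<exists>x\<in>beads L (part lam). hook_len lam i j \<le> x \<and> x - hook_len lam i j \<notin> beads L (part lam)"
proof -
  let ?p = "part lam"
  define c where "c = conj_part lam j"
  have jp: "j < ?p i" using ij by (simp add: diagram_part)
  have ic: "i < c" using conj_part_char[OF lam(1)] jp c_def by blast
  have cL: "c \<le> L" using conj_part_le[of lam j] lam(2) c_def by simp
  have iL: "i < L" using ic cL by simp
  have h: "hook_len lam i j = ?p i - j + c - i - 1" using hook_len_part[OF ij lam(1)] c_def by simp
  define x where "x = bd L ?p i"
  have xB: "x \<in> beads L ?p" using iL by (simp add: beads_def x_def)
  have tx: "hook_len lam i j \<le> x" using h x_def bd_def cL jp ic by (simp add: bd_def)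
  have y: "x - hook_len lam i j = L + j - c" using h x_def jp ic cL by (simp add: bd_def)
  have "L + j - c \<notin> beads L ?p"
  proof
    assume "L + j - c \<in> beads L ?p"
    then obtain r where r: "r < L" "bd L ?p r = L + j - c" by (auto simp: beads_def)
    show False
    proof (cases "r < c")
      case True
      then have "j < ?p r" using conj_part_char[OF lam(1)] c_def by blast
      then show False using r True cL by (simp add: bd_def)
    next
      case False
      then have "?p r \<le> j" using conj_part_char[OF lam(1)] c_def by (meson not_le)
      then show False using r False cL by (simp add: bd_def)
    qed
  qed
  then show ?thesis using xB tx y by metis
qed

lemma anti_bd: "anti p \<Longrightarrow> anti (bd L p)"
  unfolding anti_def bd_def by (meson add_le_mono diff_le_mono2)

lemma hook_bwd:
  assumes lam: "partition lam" "length lam \<le> L" and t: "0 < t"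
    and xB: "x \<in> beads L (part lam)" and tx: "t \<le> x" and yB: "x - t \<notin> beads L (part lam)"
  shows "\<exists>(i, j)\<in>diagram lam. hook_len lam i j = t"
proof -
  let ?p = "part lam"
  let ?b = "bd L ?p"
  have ap: "anti ?p" using anti_part[OF lam(1)] .
  have ab: "anti ?b" using anti_bd[OF ap] .
  obtain i where i: "i < L" "x = ?b i" using xB by (auto simp: beads_def)
  define y where "y = x - t"
  define k where "k = card {r. y < ?b r}"
  have bL: "L \<le> r \<Longrightarrow> ?b r = 0" for r using lam(2) by (simp add: bd_def part_def)
  have S: "{r. y < ?b r} = {..<k}" unfolding k_def
    by (rule antitone_set_eq[where N=L]) (use ab bL in \<open>auto dest: antiD\<close>)
  have below: "r < k \<longleftrightarrow> y < ?b r" for r using S by blast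
  have ik: "i < k" using below i t tx y_def by simp
  have kL: "k \<le> L"
  proof (rule ccontr)
    assume "\<not> k \<le> L" then have "y < ?b L" using below[of L] by simp
    then show False using bL by simp
  qed
  have notin: "r < L \<Longrightarrow> ?b r \<noteq> y" for r using yB y_def unfolding beads_def by (metis image_eqI lessThan_iff)
  have ge: "r < k \<Longrightarrow> y + 1 + (k - 1 - r) \<le> ?b r" for r
  proof -
    assume rk: "r < k"
    have "?b (k - 1) + (k - 1 - r) \<le> ?b r" using bd_gap[OF ap, of r "k - 1" L] rk kL by simp
    moreover have "y < ?b (k - 1)" using below[of "k - 1"] rk by simp
    ultimately show ?thesis by simp
  qed
  have ykL: "L \<le> y + k"
  proof (cases "k < L")
    case True
    then have "?b k < y" using below notin by (metis le_neq_implies_less not_less less_irrefl)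
    then show ?thesis using True by (simp add: bd_def)
  next
    case False then show ?thesis using kL by simp
  qed
  define j where "j = y + k - L"
  have pk: "?p k \<le> j"
  proof (cases "k < L")
    case True
    then have "?b k < y" using below notin by (metis le_neq_implies_less not_less less_irrefl)
    then show ?thesis using True ykL by (simp add: bd_def j_def)
  next
    case False then show ?thesis using lam(2) kL by (simp add: part_def)
  qed
  have char: "j < ?p r \<longleftrightarrow> r < k" for r
  proof
    assume "j < ?p r"
    show "r < k"
    proof (rule ccontr)
      assume "\<not> r < k"
      then have "?p r \<le> ?p k" using antiD[OF ap] by simp
      then show False using pk \<open>j < ?p r\<close> by simp
    qed
  next
    assume rk: "r < k"
    have "y + 1 + (k - 1 - r) \<le> ?b r" using ge[OF rk] .
    then show "j < ?p r" using rk kL ykL by (simp add: bd_def j_def)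
  qed
  have conj: "conj_part lam j = k"
  proof -
    have "{r. j < ?p r} = {..<k}" using char by auto
    then show ?thesis by (simp add: conj_part_eq)
  qed
  have ij: "(i, j) \<in> diagram lam" using char ik by (simp add: diagram_part)
  have xge: "y + 1 + (k - 1 - i) \<le> x" using ge[OF ik] i by simp
  have "hook_len lam i j = ?p i - j + k - i - 1" using hook_len_part[OF ij lam(1)] conj by simp
  also have "\<dots> = t" using xge i ik kL ykL tx y_def by (simp add: bd_def j_def)
  finally show ?thesis using ij by blast
qed

lemma is_core_beads:
  assumes lam: "partition lam" "length lam \<le> L" and t: "0 < t"
  shows "is_core t lam \<longleftrightarrow> closed t (beads L (part lam))"
proof
  assume c: "is_core t lam"
  show "closed t (beads L (part lam))" unfolding closed_def
  proof (intro ballI impI, rule ccontr)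
    fix x assume "x \<in> beads L (part lam)" "t \<le> x" "x - t \<notin> beads L (part lam)"
    then obtain i j where "(i, j) \<in> diagram lam" "hook_len lam i j = t"
      using hook_bwd[OF lam t] by blast
    then show False using c unfolding is_core_def by blast
  qed
next
  assume c: "closed t (beads L (part lam))"
  have "\<not> (hook_len lam i j = t)" if "(i, j) \<in> diagram lam" for i j
    using hook_fwd[OF lam that] c unfolding closed_def by auto
  then show "is_core t lam" unfolding is_core_def using lam(1) by auto
qed



lemma move_beads:
  assumes ap: "anti p" and p0: "\<And>r. L \<le> r \<Longrightarrow> p r = 0" and ik: "i < k" "k \<le> L"
    and qout: "\<And>r. r < i \<or> k \<le> r \<Longrightarrow> q r = p r"
    and qin: "\<And>r. i \<le> r \<Longrightarrow> r < k - 1 \<Longrightarrow> q r = p (Suc r) - 1 \<and> 1 \<le> p (Suc r)"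
  shows "beads L q = insert (bd L q (k - 1)) (beads L p - {bd L p i})"
proof -
  have U: "{..<L} = {..<i} \<union> {i..<k-1} \<union> {k-1} \<union> {k..<L}" using ik by auto
  have U2: "{..<L} - {i} = {..<i} \<union> Suc ` {i..<k-1} \<union> {k..<L}"
  proof (intro set_eqI iffI)
    fix x assume "x \<in> {..<L} - {i}"
    then show "x \<in> {..<i} \<union> Suc ` {i..<k-1} \<union> {k..<L}"
      using ik by (cases x) (auto simp: image_iff)
  qed (use ik in auto)
  have a: "bd L q ` {..<i} = bd L p ` {..<i}" by (intro image_cong) (auto simp: bd_def qout)
  have b: "bd L q ` {k..<L} = bd L p ` {k..<L}" by (intro image_cong) (auto simp: bd_def qout)
  have c: "bd L q ` {i..<k-1} = bd L p ` Suc ` {i..<k-1}"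
    unfolding image_image
  proof (intro image_cong refl)
    fix r assume r: "r \<in> {i..<k-1}"
    then have "q r = p (Suc r) - 1" "1 \<le> p (Suc r)" using qin by auto
    moreover have "Suc (Suc r) \<le> L" using r ik by auto
    ultimately show "bd L q r = bd L p (Suc r)" unfolding bd_def by arith
  qed
  have "beads L p - {bd L p i} = bd L p ` ({..<L} - {i})"
    unfolding beads_def using ik by (subst inj_on_image_set_diff[OF bd_inj[OF ap]]) auto
  also have "\<dots> = bd L p ` {..<i} \<union> bd L p ` Suc ` {i..<k-1} \<union> bd L p ` {k..<L}"
    unfolding U2 by (simp add: image_Un)
  finally have e: "beads L p - {bd L p i} = bd L q ` {..<i} \<union> bd L q ` {i..<k-1} \<union> bd L q ` {k..<L}"
    using a b c by simp
  have "beads L q = bd L q ` ({..<i} \<union> {i..<k-1} \<union> {k-1} \<union> {k..<L})"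
    unfolding beads_def using U by simp
  also have "\<dots> = insert (bd L q (k - 1)) (bd L q ` {..<i} \<union> bd L q ` {i..<k-1} \<union> bd L q ` {k..<L})"
    by auto
  also have "\<dots> = insert (bd L q (k - 1)) (beads L p - {bd L p i})" using e by simp
  finally show ?thesis .
qed

lemma sum_move:
  fixes B :: "nat set"
  assumes "finite B" "x \<in> B" "y \<notin> B"
  shows "\<Sum>(insert y (B - {x})) + x = \<Sum>B + y"
proof -
  have "\<Sum>(insert y (B - {x})) = y + \<Sum>(B - {x})" using assms by simp
  moreover have "\<Sum>B = x + \<Sum>(B - {x})" using assms by (simp add: sum.remove)
  ultimately show ?thesis by simp
qed

lemma card_skew:
  assumes lam: "partition lam" "length lam \<le> L" and mu: "partition mu"
    and sub: "diagram mu \<subseteq> diagram lam" and lmu: "length mu \<le> L"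
    and x: "x \<in> beads L (part lam)" and y: "y \<notin> beads L (part lam)"
    and eq: "beads L (part mu) = insert y (beads L (part lam) - {x})"
  shows "card (diagram lam - diagram mu) + y = x"
proof -
  have "diagram lam = Sigma {..<L} (\<lambda>r. {..<part lam r})"
    using lam(2) by (auto simp: diagram_part part_def split: if_splits)
  then have fin: "finite (diagram lam)" by simp
  have c: "card (diagram lam - diagram mu) = card (diagram lam) - card (diagram mu)"
    using sub fin by (simp add: card_Diff_subset finite_subset)
  have cle: "card (diagram mu) \<le> card (diagram lam)" using sub fin by (simp add: card_mono)
  have s1: "\<Sum>(beads L (part lam)) = card (diagram lam) + (\<Sum>r<L. L - 1 - r)"
    using sum_beads[OF anti_part[OF lam(1)]] card_diagram[OF lam(2)] by simp
  have s2: "\<Sum>(beads L (part mu)) = card (diagram mu) + (\<Sum>r<L. L - 1 - r)"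
    using sum_beads[OF anti_part[OF mu]] card_diagram[OF lmu] by simp
  have "\<Sum>(beads L (part mu)) + x = \<Sum>(beads L (part lam)) + y"
    using sum_move[OF finite_beads x y] eq by simp
  then show ?thesis using s1 s2 c cle by simp
qed



lemma gap_setup:
  assumes lam: "partition lam" "length lam \<le> L" and t: "0 < t"
    and xB: "x \<in> beads L (part lam)" and tx: "t \<le> x" and yB: "x - t \<notin> beads L (part lam)"
  obtains i k where "i < k" "k \<le> L" "x = bd L (part lam) i" "L \<le> x - t + k"
    "\<And>r. x - t + k - L < part lam r \<longleftrightarrow> r < k"
proof -
  let ?p = "part lam"
  let ?b = "bd L ?p"
  have ap: "anti ?p" using anti_part[OF lam(1)] .
  have ab: "anti ?b" using anti_bd[OF ap] .
  obtain i where i: "i < L" "x = ?b i" using xB by (auto simp: beads_def)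
  define y where "y = x - t"
  define k where "k = card {r. y < ?b r}"
  have bL: "L \<le> r \<Longrightarrow> ?b r = 0" for r using lam(2) by (simp add: bd_def part_def)
  have S: "{r. y < ?b r} = {..<k}" unfolding k_def
    by (rule antitone_set_eq[where N=L]) (use ab bL in \<open>auto dest: antiD\<close>)
  have below: "r < k \<longleftrightarrow> y < ?b r" for r using S by blast
  have ik: "i < k" using below i t tx y_def by simp
  have kL: "k \<le> L"
  proof (rule ccontr)
    assume "\<not> k \<le> L" then have "y < ?b L" using below[of L] by simp
    then show False using bL by simp
  qed
  have notin: "r < L \<Longrightarrow> ?b r \<noteq> y" for r using yB y_def unfolding beads_def by (metis image_eqI lessThan_iff)
  have ge: "r < k \<Longrightarrow> y + 1 + (k - 1 - r) \<le> ?b r" for r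
  proof -
    assume rk: "r < k"
    have "?b (k - 1) + (k - 1 - r) \<le> ?b r" using bd_gap[OF ap, of r "k - 1" L] rk kL by simp
    moreover have "y < ?b (k - 1)" using below[of "k - 1"] rk by simp
    ultimately show ?thesis by simp
  qed
  have ykL: "L \<le> y + k"
  proof (cases "k < L")
    case True
    then have "?b k < y" using below notin by (metis le_neq_implies_less not_less less_irrefl)
    then show ?thesis using True by (simp add: bd_def)
  next
    case False then show ?thesis using kL by simp
  qed
  define j where "j = y + k - L"
  have pk: "?p k \<le> j"
  proof (cases "k < L")
    case True
    then have "?b k < y" using below notin by (metis le_neq_implies_less not_less less_irrefl)
    then show ?thesis using True ykL by (simp add: bd_def j_def)
  next
    case False then show ?thesis using lam(2) kL by (simp add: part_def)
  qed
  have char: "j < ?p r \<longleftrightarrow> r < k" for r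
  proof
    assume "j < ?p r"
    show "r < k"
    proof (rule ccontr)
      assume "\<not> r < k"
      then have "?p r \<le> ?p k" using antiD[OF ap] by simp
      then show False using pk \<open>j < ?p r\<close> by simp
    qed
  next
    assume rk: "r < k"
    have "y + 1 + (k - 1 - r) \<le> ?b r" using ge[OF rk] .
    then show "j < ?p r" using rk kL ykL by (simp add: bd_def j_def)
  qed
  show ?thesis using that[OF ik kL i(2)] ykL char unfolding j_def y_def by blast
qed

lemma cell_adj_sym: "cell_adj a b \<Longrightarrow> cell_adj b a"
  unfolding cell_adj_def by auto

lemma rtranclp_adj_sym:
  assumes "(\<lambda>x y. x \<in> S \<and> y \<in> S \<and> cell_adj x y)\<^sup>*\<^sup>* a b"
  shows "(\<lambda>x y. x \<in> S \<and> y \<in> S \<and> cell_adj x y)\<^sup>*\<^sup>* b a"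
proof -
  have "symp (\<lambda>x y. x \<in> S \<and> y \<in> S \<and> cell_adj x y)"
    by (rule sympI) (auto intro: cell_adj_sym)
  then show ?thesis using assms by (meson sympD symp_rtranclp)
qed

lemma row_path:
  assumes "\<And>c. q \<le> c \<Longrightarrow> c < P \<Longrightarrow> (r, c) \<in> S"
  shows "q \<le> c \<Longrightarrow> c + n < P \<Longrightarrow> (\<lambda>x y. x \<in> S \<and> y \<in> S \<and> cell_adj x y)\<^sup>*\<^sup>* (r, c) (r, c + n)"
proof (induction n)
  case 0 then show ?case by simp
next
  case (Suc n)
  then have "(\<lambda>x y. x \<in> S \<and> y \<in> S \<and> cell_adj x y)\<^sup>*\<^sup>* (r, c) (r, c + n)" by simp
  moreover have "(r, c + n) \<in> S" "(r, c + Suc n) \<in> S" using Suc.prems assms by auto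
  moreover have "cell_adj (r, c + n) (r, c + Suc n)" by (simp add: cell_adj_def)
  ultimately show ?case by (simp add: rtranclp.rtrancl_into_rtrancl)
qed

lemma rim_construct:
  assumes lam: "partition lam" "length lam \<le> L" and t: "0 < t"
    and xB: "x \<in> beads L (part lam)" and tx: "t \<le> x" and yB: "x - t \<notin> beads L (part lam)"
  shows "\<exists>mu. removes_rim_hook t lam mu \<and> length mu \<le> L \<and>
              beads L (part mu) = insert (x - t) (beads L (part lam) - {x})"
proof -
  let ?p = "part lam"
  have ap: "anti ?p" using anti_part[OF lam(1)] .
  obtain i k where ik: "i < k" "k \<le> L" and xi: "x = bd L ?p i" and ykL: "L \<le> x - t + k"
    and char: "\<And>r. x - t + k - L < ?p r \<longleftrightarrow> r < k"
    using gap_setup[OF assms] by blast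
  define y where "y = x - t"
  define j where "j = y + k - L"
  have pj: "j < ?p r \<longleftrightarrow> r < k" for r using char unfolding j_def y_def .
  define q where "q r = (if r < i \<or> k \<le> r then ?p r else if r < k - 1 then ?p (Suc r) - 1 else j)" for r
  have pS: "i \<le> r \<Longrightarrow> r < k - 1 \<Longrightarrow> j < ?p (Suc r)" for r using pj by simp
  have qle: "q r \<le> ?p r" for r
  proof -
    have "?p (Suc r) \<le> ?p r" using antiD[OF ap] by simp
    then show ?thesis using pj[of r] by (auto simp: q_def)
  qed
  have qlt: "q r < ?p r \<longleftrightarrow> (i \<le> r \<and> r < k)" for r
  proof -
    have "?p (Suc r) \<le> ?p r" using antiD[OF ap] by simp
    moreover have "i \<le> r \<Longrightarrow> r < k - 1 \<Longrightarrow> 0 < ?p (Suc r)" using pS by fastforce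
    ultimately show ?thesis using pj[of r] by (auto simp: q_def)
  qed
  have aq: "anti q"
  proof (rule anti_Suc)
    fix r
    have a1: "?p (Suc r) \<le> ?p r" "?p (Suc (Suc r)) \<le> ?p (Suc r)" using antiD[OF ap] by auto
    have a2: "?p k \<le> j" using pj[of k] by simp
    have a3: "Suc r < k \<Longrightarrow> j < ?p (Suc r)" using pj by simp
    have a4: "r < k \<Longrightarrow> j < ?p r" using pj by simp
    show "q (Suc r) \<le> q r"
      using a1 a2 a3 a4 ik unfolding q_def
      by (cases "Suc r < i"; cases "k \<le> r"; cases "Suc r = k"; cases "Suc r < k - 1"; cases "r < k - 1") auto
  qed
  have q0: "L \<le> r \<Longrightarrow> q r = 0" for r using ik lam(2) by (simp add: q_def part_def)
  obtain mu where mu: "partition mu" "part mu = q" "length mu \<le> L" using of_fun[OF aq q0] by blast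
  have sub: "diagram mu \<subseteq> diagram lam"
    unfolding diagram_part mu(2) using qle by (auto intro: less_le_trans)
  have p0: "L \<le> r \<Longrightarrow> ?p r = 0" for r using lam(2) by (simp add: part_def)
  have qin: "i \<le> r \<Longrightarrow> r < k - 1 \<Longrightarrow> q r = ?p (Suc r) - 1 \<and> 1 \<le> ?p (Suc r)" for r
    using pS[of r] by (auto simp: q_def)
  have qout: "r < i \<or> k \<le> r \<Longrightarrow> q r = ?p r" for r by (simp add: q_def)
  have mv: "beads L q = insert (bd L q (k - 1)) (beads L ?p - {bd L ?p i})"
    by (rule move_beads[OF ap p0 ik qout qin])
  have qk: "bd L q (k - 1) = y" using ik ykL by (simp add: bd_def q_def j_def y_def)
  have eq: "beads L (part mu) = insert y (beads L ?p - {x})" using mv qk xi mu(2) by simp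
  have yB': "y \<notin> beads L ?p" using yB y_def by simp
  have xB': "x \<in> beads L ?p" using xB .
  have cS: "card (diagram lam - diagram mu) + y = x"
    by (rule card_skew[OF lam mu(1) sub mu(3) xB' yB' eq])
  define S where "S = diagram lam - diagram mu"
  have Sdef: "S = {(r, c). q r \<le> c \<and> c < ?p r}"
    unfolding S_def diagram_part mu(2) by auto
  have memS: "(r, c) \<in> S \<longleftrightarrow> q r \<le> c \<and> c < ?p r" for r c unfolding Sdef by simp
  have cardS: "card S = t" using cS tx unfolding S_def y_def by simp
  have neS: "S \<noteq> {}" using memS[of i "q i"] qlt[of i] ik by auto
  have no2: "no_2x2 S"
    unfolding no_2x2_def
  proof clarify
    fix r c assume a: "(r, c) \<in> S" "(Suc r, c) \<in> S" "(r, Suc c) \<in> S" "(Suc r, Suc c) \<in> S"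
    have "q r < ?p r" "q (Suc r) < ?p (Suc r)" using a memS by (meson le_less_trans)+
    then have "i \<le> r" "Suc r < k" using qlt by auto
    then have "q r = ?p (Suc r) - 1" using qin by simp
    then show False using a(1) a(4) memS by fastforce
  qed
  let ?R = "\<lambda>x y. x \<in> S \<and> y \<in> S \<and> cell_adj x y"
  have rowS: "i \<le> r \<Longrightarrow> r < k \<Longrightarrow> q r \<le> c \<Longrightarrow> c < ?p r \<Longrightarrow> (r, c) \<in> S" for r c using memS by simp
  have hor: "i \<le> r \<Longrightarrow> r < k \<Longrightarrow> q r \<le> c \<Longrightarrow> c < ?p r \<Longrightarrow> ?R\<^sup>*\<^sup>* (r, c) (r, ?p r - 1)" for r c
  proof -
    assume h: "i \<le> r" "r < k" "q r \<le> c" "c < ?p r"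
    have "?R\<^sup>*\<^sup>* (r, c) (r, c + (?p r - 1 - c))"
      by (rule row_path[where q="q r" and P="?p r"]) (use h memS in auto)
    then show ?thesis using h by simp
  qed
  have step: "i \<le> r \<Longrightarrow> Suc r < k \<Longrightarrow> ?R\<^sup>*\<^sup>* (r, ?p r - 1) (Suc r, ?p (Suc r) - 1)" for r
  proof -
    assume h: "i \<le> r" "Suc r < k"
    have qr: "q r = ?p (Suc r) - 1" "1 \<le> ?p (Suc r)" using qin h by auto
    have lt: "q r < ?p r" using qlt h by simp
    have "?R\<^sup>*\<^sup>* (r, q r) (r, ?p r - 1)" using hor[of r "q r"] h lt by simp
    then have p1: "?R\<^sup>*\<^sup>* (r, ?p r - 1) (r, q r)" by (rule rtranclp_adj_sym)
    have lt2: "q (Suc r) < ?p (Suc r)" using qlt h by simp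
    have "?R (r, q r) (Suc r, ?p (Suc r) - 1)"
      using memS qr lt lt2 by (auto simp: cell_adj_def)
    then show ?thesis using p1 qr by (simp add: rtranclp.rtrancl_into_rtrancl)
  qed
  have tobase: "i \<le> r \<Longrightarrow> r < k \<Longrightarrow> ?R\<^sup>*\<^sup>* (r, ?p r - 1) (k - 1, ?p (k - 1) - 1)" for r
  proof (induction "k - 1 - r" arbitrary: r)
    case 0 then have "r = k - 1" by simp
    then show ?case by simp
  next
    case (Suc n)
    then have "?R\<^sup>*\<^sup>* (Suc r, ?p (Suc r) - 1) (k - 1, ?p (k - 1) - 1)" by simp
    moreover have "?R\<^sup>*\<^sup>* (r, ?p r - 1) (Suc r, ?p (Suc r) - 1)" using step Suc by simp
    ultimately show ?case by (meson rtranclp_trans)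
  qed
  have allbase: "a \<in> S \<Longrightarrow> ?R\<^sup>*\<^sup>* a (k - 1, ?p (k - 1) - 1)" for a
  proof -
    assume aS: "a \<in> S"
    obtain r c where a: "a = (r, c)" by (cases a)
    have h: "q r \<le> c" "c < ?p r" using aS a memS by auto
    then have "q r < ?p r" by simp
    then have "i \<le> r" "r < k" using qlt[of r] by auto
    then show ?thesis using hor[of r c] tobase[of r] h a by (meson rtranclp_trans)
  qed
  have conn: "cells_connected S"
    unfolding cells_connected_def
    using allbase rtranclp_adj_sym by (meson rtranclp_trans)
  have "removes_rim_hook t lam mu"
    unfolding removes_rim_hook_def Let_def using mu(1) sub neS cardS conn no2 unfolding S_def by simp
  then show ?thesis using mu(3) eq y_def by blast
qed



lemma sep_path:
  assumes nob: "\<not> (\<exists>c. (r, c) \<in> S \<and> (Suc r, c) \<in> S)"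
    and p: "(\<lambda>x y. x \<in> S \<and> y \<in> S \<and> cell_adj x y)\<^sup>*\<^sup>* a b"
  shows "fst a \<le> r \<Longrightarrow> fst b \<le> r"
  using p
proof (induction rule: rtranclp_induct)
  case base then show ?case .
next
  case (step y z)
  then have yr: "fst y \<le> r" by simp
  show ?case
  proof (rule ccontr)
    assume "\<not> fst z \<le> r"
    then have "fst z = Suc (fst y) \<and> snd z = snd y \<and> fst y = r"
      using step(2) yr unfolding cell_adj_def by auto
    then show False using nob step(2) by (metis prod.collapse)
  qed
qed

lemma rim_extract:
  assumes lam: "partition lam" "length lam \<le> L" and rh: "removes_rim_hook t lam mu"
  shows "partition mu \<and> length mu \<le> L \<and>
    (\<exists>x\<in>beads L (part lam). t \<le> x \<and> x - t \<notin> beads L (part lam) \<and>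
        beads L (part mu) = insert (x - t) (beads L (part lam) - {x}))"
proof -
  let ?p = "part lam" and ?q = "part mu"
  define S where "S = diagram lam - diagram mu"
  have mu: "partition mu" and sub: "diagram mu \<subseteq> diagram lam" and neS: "S \<noteq> {}"
    and cS: "card S = t" and conn: "cells_connected S" and no2: "no_2x2 S"
    using rh unfolding removes_rim_hook_def Let_def S_def by auto
  have ap: "anti ?p" using anti_part[OF lam(1)] .
  have aq: "anti ?q" using anti_part[OF mu] .
  have qle: "?q r \<le> ?p r" for r
  proof (rule ccontr)
    assume "\<not> ?q r \<le> ?p r"
    then have "(r, ?p r) \<in> diagram mu" by (simp add: diagram_part)
    then show False using sub by (auto simp: diagram_part)
  qed
  have memS: "(r, c) \<in> S \<longleftrightarrow> ?q r \<le> c \<and> c < ?p r" for r c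
    unfolding S_def diagram_part by auto
  define Rw where "Rw = {r. ?q r < ?p r}"
  have RwL: "Rw \<subseteq> {..<L}"
  proof
    fix r assume "r \<in> Rw"
    then have "0 < ?p r" unfolding Rw_def by simp
    then show "r \<in> {..<L}" using len_le_L_part[OF lam] by simp
  qed
  have finR: "finite Rw" using RwL finite_subset by blast
  have neR: "Rw \<noteq> {}"
  proof -
    obtain a where "a \<in> S" using neS by blast
    then obtain r c where "(r, c) \<in> S" by (cases a) auto
    then have "r \<in> Rw" using memS Rw_def by auto
    then show ?thesis by blast
  qed
  define i where "i = Min Rw"
  define k where "k = Suc (Max Rw)"
  have iR: "i \<in> Rw" using finR neR i_def by simp
  have kR: "k - 1 \<in> Rw" using finR neR k_def by simp
  have ik: "i < k" using finR neR by (simp add: i_def k_def le_imp_less_Suc)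
  have kL: "k \<le> L" using kR RwL ik by auto
  have qout: "r < i \<or> k \<le> r \<Longrightarrow> ?q r = ?p r" for r
  proof -
    assume "r < i \<or> k \<le> r"
    then have "r \<notin> Rw" using finR i_def k_def by (auto dest: Min_le Max_ge)
    then show ?thesis using qle[of r] Rw_def by simp
  qed
  let ?R = "\<lambda>x y. x \<in> S \<and> y \<in> S \<and> cell_adj x y"
  have bridge: "i \<le> r \<Longrightarrow> r < k - 1 \<Longrightarrow> \<exists>c. (r, c) \<in> S \<and> (Suc r, c) \<in> S" for r
  proof (rule ccontr)
    assume h: "i \<le> r" "r < k - 1" "\<not> (\<exists>c. (r, c) \<in> S \<and> (Suc r, c) \<in> S)"
    have a: "(i, ?q i) \<in> S" using iR memS Rw_def by auto
    have b: "(k - 1, ?q (k - 1)) \<in> S" using kR memS Rw_def by auto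
    have "?R\<^sup>*\<^sup>* (i, ?q i) (k - 1, ?q (k - 1))" using conn a b unfolding cells_connected_def by blast
    then have "fst (k - 1, ?q (k - 1)) \<le> r" using sep_path[OF h(3)] h(1) by auto
    then show False using h(2) by simp
  qed
  have qin: "i \<le> r \<Longrightarrow> r < k - 1 \<Longrightarrow> ?q r = ?p (Suc r) - 1 \<and> 1 \<le> ?p (Suc r)" for r
  proof -
    assume h: "i \<le> r" "r < k - 1"
    obtain c where c: "(r, c) \<in> S" "(Suc r, c) \<in> S" using bridge[OF h] by blast
    have c1: "?q r \<le> c" "c < ?p (Suc r)" using c memS by auto
    have pS: "?p (Suc r) \<le> ?p r" using antiD[OF ap] by simp
    have qS: "?q (Suc r) \<le> ?q r" using antiD[OF aq] by simp
    have "\<not> ?q r + 2 \<le> ?p (Suc r)"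
    proof
      assume h2: "?q r + 2 \<le> ?p (Suc r)"
      define c0 where "c0 = ?p (Suc r) - 2"
      have "(r, c0) \<in> S" "(Suc r, c0) \<in> S" "(r, Suc c0) \<in> S" "(Suc r, Suc c0) \<in> S"
        using memS h2 pS qS unfolding c0_def by auto
      then show False using no2 unfolding no_2x2_def by blast
    qed
    then show ?thesis using c1 by simp
  qed
  have p0: "L \<le> r \<Longrightarrow> ?p r = 0" for r using lam(2) by (simp add: part_def)
  have mv: "beads L ?q = insert (bd L ?q (k - 1)) (beads L ?p - {bd L ?p i})"
    by (rule move_beads[OF ap p0 ik kL qout qin])
  define x where "x = bd L ?p i"
  define y where "y = bd L ?q (k - 1)"
  have xB: "x \<in> beads L ?p" using ik kL x_def by (auto simp: beads_def)
  have qk: "?q (k - 1) < ?p (k - 1)" using kR Rw_def by simp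
  have yx: "y < bd L ?p (k - 1)" using qk by (simp add: y_def bd_def)
  have yB: "y \<notin> beads L ?p"
  proof
    assume "y \<in> beads L ?p"
    then obtain r where r: "r < L" "y = bd L ?p r" by (auto simp: beads_def)
    show False
    proof (cases "r < k")
      case True
      then have "bd L ?p (k - 1) \<le> bd L ?p r" using antiD[OF anti_bd[OF ap]] by simp
      then show False using r yx by simp
    next
      case False
      then have "bd L ?p r \<le> bd L ?p k" using antiD[OF anti_bd[OF ap]] by simp
      moreover have "?p k \<le> ?q (k - 1)" using qout[of k] antiD[OF aq, of "k - 1" k] by simp
      ultimately show False using r False ik by (simp add: y_def bd_def)
    qed
  qed
  have lmu: "length mu \<le> L"
  proof (rule ccontr)
    assume "\<not> length mu \<le> L"
    then have "0 < ?q L" using part_pos_iff[OF mu] by simp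
    then have "0 < ?p L" using qle[of L] by simp
    then show False using p0 by simp
  qed
  have eq: "beads L ?q = insert y (beads L ?p - {x})" using mv x_def y_def by simp
  have "card S + y = x" unfolding S_def by (rule card_skew[OF lam mu sub lmu xB yB eq])
  then have "t \<le> x" "x - t = y" using cS by auto
  then show ?thesis using mu lmu xB yB eq by auto
qed



definition push :: "nat \<Rightarrow> nat set \<Rightarrow> nat set" where
  "push t X = {x. x div t < card {y\<in>X. y mod t = x mod t}}"

definition runner :: "nat \<Rightarrow> nat set \<Rightarrow> nat \<Rightarrow> nat" where
  "runner t X r = card {y\<in>X. y mod t = r}"

lemma dm: "y mod t = r \<Longrightarrow> y = r + t * (y div t)"
  for y t r :: nat by (metis add.commute div_mult_mod_eq mult.commute)

lemma push_runner_set: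
  assumes t: "0 < t" and r: "r < t"
  shows "{y \<in> push t X. y mod t = r} = (\<lambda>q. r + t * q) ` {..<runner t X r}"
proof (intro set_eqI iffI)
  fix y assume "y \<in> {y \<in> push t X. y mod t = r}"
  then have "y mod t = r" "y div t < runner t X r" by (auto simp: push_def runner_def)
  then show "y \<in> (\<lambda>q. r + t * q) ` {..<runner t X r}"
    by (intro image_eqI[of _ _ "y div t"]) (auto intro: dm)
next
  fix y assume "y \<in> (\<lambda>q. r + t * q) ` {..<runner t X r}"
  then obtain q where "q < runner t X r" "y = r + t * q" by auto
  then show "y \<in> {y \<in> push t X. y mod t = r}" using t r by (auto simp: push_def runner_def)
qed

lemma card_runner_push:
  assumes t: "0 < t" and r: "r < t"
  shows "runner t (push t X) r = runner t X r"
proof -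
  have "inj_on (\<lambda>q. r + t * q) {..<runner t X r}" using t by (auto simp: inj_on_def)
  then show ?thesis unfolding runner_def[of t "push t X"] push_runner_set[OF t r] by (simp add: card_image)
qed

lemma push_union:
  assumes t: "0 < t"
  shows "push t X = (\<Union>r<t. (\<lambda>q. r + t * q) ` {..<runner t X r})"
proof -
  have "push t X = (\<Union>r<t. {y \<in> push t X. y mod t = r})" using t by auto
  then show ?thesis using push_runner_set[OF t] by simp
qed

lemma finite_push: "0 < t \<Longrightarrow> finite (push t X)"
  by (simp add: push_union)

lemma card_by_runner:
  assumes t: "0 < t" and fin: "finite X"
  shows "card X = (\<Sum>r<t. runner t X r)"
proof -
  have "X = (\<Union>r<t. {y \<in> X. y mod t = r})" using t by auto
  then have "card X = card (\<Union>r<t. {y \<in> X. y mod t = r})" by simp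
  also have "\<dots> = (\<Sum>r<t. card {y \<in> X. y mod t = r})"
    by (rule card_UN_disjoint) (use fin in auto)
  finally show ?thesis by (simp add: runner_def)
qed

lemma card_push: "0 < t \<Longrightarrow> finite X \<Longrightarrow> card (push t X) = card X"
  using card_by_runner[of t X] card_by_runner[of t "push t X"] finite_push card_runner_push
  by simp

lemma push_cong: "(\<And>r. r < t \<Longrightarrow> runner t X r = runner t Y r) \<Longrightarrow> 0 < t \<Longrightarrow> push t X = push t Y"
  unfolding push_def runner_def by auto

lemma closed_push: "0 < t \<Longrightarrow> closed t (push t X)"
  unfolding closed_def push_def
proof (intro ballI impI, simp)
  fix x assume "0 < t" "x div t < card {y \<in> X. y mod t = x mod t}" "t \<le> x"
  moreover have "(x - t) div t = x div t - 1" "(x - t) mod t = x mod t"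
    using \<open>t \<le> x\<close> \<open>0 < t\<close> by (simp_all add: le_div_geq le_mod_geq)
  ultimately show "(x - t) div t < card {y \<in> X. y mod t = (x - t) mod t}" by simp
qed

lemma down_closed_finite:
  assumes "finite Q" "\<And>q q'. q \<in> Q \<Longrightarrow> q' \<le> q \<Longrightarrow> q' \<in> Q"
  shows "Q = {..<card Q}"
proof -
  define f where "f q = (if q \<in> Q then 1 else 0::nat)" for q
  have "{q. 0 < f q} = {..<card {q. 0 < f q}}"
    by (rule antitone_set_eq[where N="Suc (Max Q)"]) (use assms in \<open>auto simp: f_def le_imp_less_Suc dest: Max_ge\<close>)
  moreover have "{q. 0 < f q} = Q" by (auto simp: f_def)
  ultimately show ?thesis by simp
qed

lemma push_closed:
  assumes t: "0 < t" and fin: "finite X" and cl: "closed t X"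
  shows "push t X = X"
proof (intro set_eqI)
  fix x
  define r where "r = x mod t"
  define Q where "Q = {q. r + t * q \<in> X}"
  have rt: "r < t" using t r_def by simp
  have Qinj: "inj_on (\<lambda>q. r + t * q) Q" using t by (auto simp: inj_on_def)
  have img: "(\<lambda>q. r + t * q) ` Q = {y \<in> X. y mod t = r}"
  proof (intro set_eqI iffI)
    fix y assume "y \<in> {y \<in> X. y mod t = r}"
    then have "y \<in> X" "y = r + t * (y div t)" using dm by auto
    then show "y \<in> (\<lambda>q. r + t * q) ` Q" unfolding Q_def
      by (intro image_eqI[of _ _ "y div t"]) auto
  qed (use rt in \<open>auto simp: Q_def\<close>)
  have "finite ((\<lambda>q. r + t * q) ` Q)" using img fin by simp
  then have finQ: "finite Q" using finite_image_iff[OF Qinj] by simp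
  have step: "q \<in> Q \<Longrightarrow> q - 1 \<in> Q" for q
  proof (cases q)
    case (Suc q')
    assume "q \<in> Q"
    then have "r + t * q \<in> X" "t \<le> r + t * q" using Suc by (auto simp: Q_def)
    then have "r + t * q - t \<in> X" using cl unfolding closed_def by blast
    moreover have "r + t * q - t = r + t * q'" using Suc by (simp add: algebra_simps)
    ultimately show ?thesis using Suc by (simp add: Q_def)
  qed simp
  have down: "q \<in> Q \<Longrightarrow> q' \<le> q \<Longrightarrow> q' \<in> Q" for q q'
  proof (induction "q - q'" arbitrary: q)
    case 0 then show ?case by simp
  next
    case (Suc n)
    have "q - 1 \<in> Q" using step Suc.prems by simp
    moreover have "n = (q - 1) - q'" "q' \<le> q - 1" using Suc.hyps(2) by arith+
    ultimately show ?case using Suc.hyps(1) by blast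
  qed
  have QQ: "Q = {..<card Q}" by (rule down_closed_finite[OF finQ down])
  have cardQ: "card {y \<in> X. y mod t = r} = card Q" using img Qinj by (metis card_image)
  have xe: "x = r + t * (x div t)" by (simp add: r_def)
  have "x \<in> push t X \<longleftrightarrow> x div t < card Q" unfolding push_def using cardQ r_def by simp
  also have "\<dots> \<longleftrightarrow> x div t \<in> Q" using QQ by (metis lessThan_iff)
  also have "\<dots> \<longleftrightarrow> x \<in> X" unfolding Q_def using xe by simp
  finally show "x \<in> push t X \<longleftrightarrow> x \<in> X" .
qed

lemma push_move:
  assumes t: "0 < t" and fin: "finite X" and x: "x \<in> X" "t \<le> x" "x - t \<notin> X"
  shows "push t (insert (x - t) (X - {x})) = push t X"
proof (rule push_cong[OF _ t])
  fix r assume "r < t"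
  let ?Y = "insert (x - t) (X - {x})"
  have m: "(x - t) mod t = x mod t" using x(2) by (simp add: le_mod_geq)
  show "runner t ?Y r = runner t X r"
  proof (cases "x mod t = r")
    case True
    have "{y \<in> ?Y. y mod t = r} = insert (x - t) ({y \<in> X. y mod t = r} - {x})"
      using True m by auto
    then have "card {y \<in> ?Y. y mod t = r} = Suc (card ({y \<in> X. y mod t = r} - {x}))"
      using fin x by simp
    also have "\<dots> = card {y \<in> X. y mod t = r}"
      using fin x True by (intro card_Suc_Diff1) auto
    finally show ?thesis by (simp add: runner_def)
  next
    case False
    then have "{y \<in> ?Y. y mod t = r} = {y \<in> X. y mod t = r}" using m by auto
    then show ?thesis by (simp add: runner_def)
  qed
qed



lemma reach_inv:
  assumes t: "0 < t" and lam: "partition lam" "length lam \<le> L"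
    and r: "(removes_rim_hook t)\<^sup>*\<^sup>* lam mu"
  shows "partition mu \<and> length mu \<le> L \<and> push t (beads L (part mu)) = push t (beads L (part lam))"
  using r
proof (induction rule: rtranclp_induct)
  case base then show ?case using lam by simp
next
  case (step y z)
  then have y: "partition y" "length y \<le> L" by auto
  obtain x where x: "x \<in> beads L (part y)" "t \<le> x" "x - t \<notin> beads L (part y)"
    and z: "partition z" "length z \<le> L" "beads L (part z) = insert (x - t) (beads L (part y) - {x})"
    using rim_extract[OF y step(2)] by blast
  have "push t (beads L (part z)) = push t (beads L (part y))"
    using z(3) push_move[OF t finite_beads x] by simp
  then show ?case using step z by simp
qed

lemma reach_core:
  assumes t: "0 < t"
  shows "partition lam \<Longrightarrow> length lam \<le> L \<Longrightarrow> \<exists>mu. (removes_rim_hook t)\<^sup>*\<^sup>* lam mu \<and> is_core t mu"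
proof (induction "\<Sum>(beads L (part lam))" arbitrary: lam rule: less_induct)
  case less
  show ?case
  proof (cases "is_core t lam")
    case True then show ?thesis by blast
  next
    case False
    then have "\<not> closed t (beads L (part lam))" using is_core_beads[OF less.prems t] by simp
    then obtain x where x: "x \<in> beads L (part lam)" "t \<le> x" "x - t \<notin> beads L (part lam)"
      unfolding closed_def by blast
    obtain mu where mu: "removes_rim_hook t lam mu" "length mu \<le> L"
      "beads L (part mu) = insert (x - t) (beads L (part lam) - {x})"
      using rim_construct[OF less.prems t x] by blast
    have pm: "partition mu" using mu(1) unfolding removes_rim_hook_def by simp
    have "\<Sum>(beads L (part mu)) + x = \<Sum>(beads L (part lam)) + (x - t)"
      using sum_move[OF finite_beads x(1) x(3)] mu(3) by simp
    moreover have "A + x = B + (x - t) \<Longrightarrow> A < B" for A B :: nat using t x(2) by arith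
    ultimately have "\<Sum>(beads L (part mu)) < \<Sum>(beads L (part lam))" by blast
    then obtain nu where "(removes_rim_hook t)\<^sup>*\<^sup>* mu nu" "is_core t nu"
      using less.hyps pm mu(2) by blast
    then show ?thesis using mu(1) by (meson converse_rtranclp_into_rtranclp)
  qed
qed

lemma core_beads:
  assumes t: "0 < t" and lam: "partition lam" "length lam \<le> L"
  shows "partition (core t lam) \<and> length (core t lam) \<le> L \<and>
         beads L (part (core t lam)) = push t (beads L (part lam))"
proof -
  let ?P = "\<lambda>mu. (removes_rim_hook t)\<^sup>*\<^sup>* lam mu \<and> is_core t mu"
  have good: "partition mu \<and> length mu \<le> L \<and> beads L (part mu) = push t (beads L (part lam))"
    if "?P mu" for mu
  proof -
    have i: "partition mu" "length mu \<le> L" "push t (beads L (part mu)) = push t (beads L (part lam))"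
      using reach_inv[OF t lam conjunct1[OF that]] by blast+
    have "closed t (beads L (part mu))" using is_core_beads[OF i(1,2) t] that by simp
    then have "push t (beads L (part mu)) = beads L (part mu)" using push_closed[OF t finite_beads] by simp
    then show ?thesis using i by simp
  qed
  have uniq: "?P mu \<Longrightarrow> ?P nu \<Longrightarrow> mu = nu" for mu nu
  proof -
    assume a: "?P mu" "?P nu"
    have g: "partition mu \<and> length mu \<le> L \<and> beads L (part mu) = push t (beads L (part lam))"
            "partition nu \<and> length nu \<le> L \<and> beads L (part nu) = push t (beads L (part lam))"
      using good a by auto
    have "part mu = part nu"
      by (rule beads_inj[where L=L]) (use g in \<open>auto simp: anti_part part0\<close>)
    then show ?thesis using g partition_eqI by blast
  qed
  obtain mu where pm: "?P mu" using reach_core[OF t lam] by blast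
  have "?P (core t lam)" unfolding core_def
  proof (rule theI[of ?P mu, OF pm])
    fix x assume "?P x" then show "x = mu" using uniq pm by blast
  qed
  then show ?thesis using good by blast
qed



definition split :: "nat \<Rightarrow> nat \<Rightarrow> nat set \<Rightarrow> nat set" where
  "split d j X = {y. d * y + j \<in> X}"

definition Gset :: "nat \<Rightarrow> nat \<Rightarrow> nat set \<Rightarrow> nat set \<Rightarrow> nat set set" where
  "Gset u v A C = {X. finite X \<and> closed (lcm u v) X \<and> push u X = A \<and> push v X = C}"

lemma beads_eq_iff:
  assumes "partition a" "length a \<le> L" "partition b" "length b \<le> L"
  shows "beads L (part a) = beads L (part b) \<longleftrightarrow> a = b"
proof
  assume "beads L (part a) = beads L (part b)"
  then have "part a = part b"
    by (intro beads_inj[where L=L]) (use assms in \<open>auto simp: anti_part part0\<close>)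
  then show "a = b" using assms partition_eqI by blast
qed simp

lemma N_to_G:
  assumes u: "0 < u" and v: "0 < v"
    and al: "partition \<alpha>" "length \<alpha> \<le> L" and ga: "partition \<gamma>" "length \<gamma> \<le> L"
  shows "N_count u v \<alpha> \<gamma> L = card (Gset u v (beads L (part \<alpha>)) (beads L (part \<gamma>)))"
proof -
  let ?N = "{lam. is_core (lcm u v) lam \<and> core u lam = \<alpha> \<and> core v lam = \<gamma> \<and> length lam \<le> L}"
  let ?G = "Gset u v (beads L (part \<alpha>)) (beads L (part \<gamma>))"
  let ?f = "\<lambda>lam. beads L (part lam)"
  have m: "0 < lcm u v" using u v by (simp add: lcm_pos_nat)
  have "bij_betw ?f ?N ?G"
  proof (rule bij_betw_imageI)
    show "inj_on ?f ?N"
      by (rule inj_onI) (use beads_eq_iff in \<open>auto simp: is_core_def\<close>)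
  next
    show "?f ` ?N = ?G"
    proof (intro set_eqI iffI)
      fix X assume "X \<in> ?f ` ?N"
      then obtain lam where lam: "is_core (lcm u v) lam" "core u lam = \<alpha>" "core v lam = \<gamma>"
        "length lam \<le> L" "X = ?f lam" by blast
      have pl: "partition lam" using lam(1) by (simp add: is_core_def)
      have "closed (lcm u v) X" using is_core_beads[OF pl lam(4) m] lam by simp
      moreover have "push u X = beads L (part \<alpha>)" using core_beads[OF u pl lam(4)] lam by simp
      moreover have "push v X = beads L (part \<gamma>)" using core_beads[OF v pl lam(4)] lam by simp
      ultimately show "X \<in> ?G" using lam(5) by (simp add: Gset_def)
    next
      fix X assume X: "X \<in> ?G"
      then have fin: "finite X" and cl: "closed (lcm u v) X" and pu: "push u X = beads L (part \<alpha>)"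
        and pv: "push v X = beads L (part \<gamma>)" by (auto simp: Gset_def)
      have "card X = L" using card_push[OF u fin] pu card_beads[OF anti_part[OF al(1)]] by simp
      then obtain lam where lam: "partition lam" "length lam \<le> L" "?f lam = X"
        using beads_exist[OF fin] by blast
      have c: "is_core (lcm u v) lam" using is_core_beads[OF lam(1,2) m] cl lam(3) by simp
      have cu: "core u lam = \<alpha>"
        using core_beads[OF u lam(1,2)] beads_eq_iff[OF _ _ al] pu lam(3) by auto
      have cv: "core v lam = \<gamma>"
        using core_beads[OF v lam(1,2)] beads_eq_iff[OF _ _ ga] pv lam(3) by auto
      show "X \<in> ?f ` ?N" using c cu cv lam by blast
    qed
  qed
  then show ?thesis unfolding N_count_def by (rule bij_betw_same_card)
qed

lemma split_eq_iff:
  assumes d: "0 < d"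
  shows "X = Y \<longleftrightarrow> (\<forall>j<d. split d j X = split d j Y)"
proof
  assume h: "\<forall>j<d. split d j X = split d j Y"
  show "X = Y"
  proof (intro set_eqI)
    fix x
    have e: "x = d * (x div d) + x mod d" by simp
    have "x div d \<in> split d (x mod d) X \<longleftrightarrow> x div d \<in> split d (x mod d) Y" using h d by simp
    then show "x \<in> X \<longleftrightarrow> x \<in> Y" unfolding split_def using e by simp
  qed
qed simp

lemma finite_split_iff:
  assumes d: "0 < d"
  shows "finite X \<longleftrightarrow> (\<forall>j<d. finite (split d j X))"
proof
  assume "finite X"
  then show "\<forall>j<d. finite (split d j X)" unfolding split_def
    by (auto intro: finite_vimageI[where h="\<lambda>y. d * y + _", unfolded vimage_def] simp: inj_on_def d)
next
  assume h: "\<forall>j<d. finite (split d j X)"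
  have "X \<subseteq> (\<Union>j<d. (\<lambda>y. d * y + j) ` split d j X)"
  proof
    fix x assume "x \<in> X"
    then have "x div d \<in> split d (x mod d) X" by (simp add: split_def)
    then show "x \<in> (\<Union>j<d. (\<lambda>y. d * y + j) ` split d j X)" using d
      by (intro UN_I[of "x mod d"]) (auto intro!: image_eqI[of _ _ "x div d"])
  qed
  then show "finite X" using h by (meson finite_UN_I finite_imageI finite_lessThan finite_subset lessThan_iff)
qed

lemma closed_split_iff:
  assumes d: "0 < d"
  shows "closed (d * m) X \<longleftrightarrow> (\<forall>j<d. closed m (split d j X))"
proof
  assume c: "closed (d * m) X"
  show "\<forall>j<d. closed m (split d j X)" unfolding closed_def split_def
  proof (intro allI impI ballI, simp)
    fix j y assume "j < d" "d * y + j \<in> X" "m \<le> y"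
    moreover have "d * y + j - d * m = d * (y - m) + j" using \<open>m \<le> y\<close> by (simp add: diff_mult_distrib2)
    moreover have "d * m \<le> d * y + j" using \<open>m \<le> y\<close> by (simp add: trans_le_add1)
    ultimately show "d * (y - m) + j \<in> X" using c unfolding closed_def by metis
  qed
next
  assume h: "\<forall>j<d. closed m (split d j X)"
  show "closed (d * m) X" unfolding closed_def
  proof (intro ballI impI)
    fix x assume x: "x \<in> X" "d * m \<le> x"
    let ?j = "x mod d" and ?y = "x div d"
    have "?y \<in> split d ?j X" using x by (simp add: split_def)
    moreover have "m \<le> ?y" using x d by (metis div_le_mono nonzero_mult_div_cancel_left not_gr0 less_not_refl)
    ultimately have "?y - m \<in> split d ?j X" using h d unfolding closed_def by simp
    moreover have "d * (?y - m) + ?j = x - d * m"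
      using x by (simp add: diff_mult_distrib2) (metis add.commute div_mult_mod_eq mult.commute add_diff_assoc2 mult_le_mono2 \<open>m \<le> ?y\<close>)
    ultimately show "x - d * m \<in> X" by (simp add: split_def)
  qed
qed

lemma mod_split_iff:
  fixes z y u j d :: nat
  assumes "0 < d" "j < d"
  shows "z mod (d * u) = d * (y mod u) + j \<longleftrightarrow> z mod d = j \<and> z div d mod u = y mod u"
proof
  assume h: "z mod (d * u) = d * (y mod u) + j"
  have e: "z mod (d * u) = d * (z div d mod u) + z mod d" by (rule mod_mult2_eq)
  have "z mod d = j" using h e assms
    by (metis add.commute mod_less mod_mult_self2 mult.commute mod_less_divisor)
  then show "z mod d = j \<and> z div d mod u = y mod u" using h e assms by simp
qed (simp add: mod_mult2_eq)

lemma split_push: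
  assumes d: "0 < d" and u: "0 < u" and j: "j < d"
  shows "split d j (push (d * u) X) = push u (split d j X)"
proof (intro set_eqI)
  fix y
  have dv: "(d * y + j) div (d * u) = y div u" using d j by (simp add: div_mult2_eq)
  have md: "(d * y + j) mod (d * u) = d * (y mod u) + j"
    using d j by (simp add: mod_mult2_eq)
  have img: "{z \<in> X. z mod (d * u) = d * (y mod u) + j} = (\<lambda>w. d * w + j) ` {w \<in> split d j X. w mod u = y mod u}"
  proof (intro set_eqI iffI)
    fix z assume "z \<in> {z \<in> X. z mod (d * u) = d * (y mod u) + j}"
    then have "z \<in> X" "z mod d = j" "z div d mod u = y mod u" using mod_split_iff[OF d j] by auto
    then show "z \<in> (\<lambda>w. d * w + j) ` {w \<in> split d j X. w mod u = y mod u}"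
      by (intro image_eqI[of _ _ "z div d"]) (auto simp: split_def)
  next
    fix z assume "z \<in> (\<lambda>w. d * w + j) ` {w \<in> split d j X. w mod u = y mod u}"
    then obtain w where "z = d * w + j" "d * w + j \<in> X" "w mod u = y mod u" by (auto simp: split_def)
    then show "z \<in> {z \<in> X. z mod (d * u) = d * (y mod u) + j}" using d j by (simp add: mod_mult2_eq)
  qed
  have inj: "inj_on (\<lambda>w. d * w + j) A" for A using d by (auto simp: inj_on_def)
  have "y \<in> split d j (push (d * u) X) \<longleftrightarrow> y div u < card {z \<in> X. z mod (d * u) = d * (y mod u) + j}"
    unfolding split_def push_def using dv md by simp
  also have "\<dots> \<longleftrightarrow> y div u < card {w \<in> split d j X. w mod u = y mod u}"
    unfolding img by (simp add: card_image[OF inj])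
  also have "\<dots> \<longleftrightarrow> y \<in> push u (split d j X)" by (simp add: push_def)
  finally show "y \<in> split d j (push (d * u) X) \<longleftrightarrow> y \<in> push u (split d j X)" .
qed

lemma split_join:
  assumes "j < d" shows "split d j {x. x div d \<in> F (x mod d)} = F j"
  using assms unfolding split_def by simp

lemma card_Gset_split:
  assumes d: "0 < d" and u: "0 < u" and v: "0 < v"
  shows "card (Gset (d * u) (d * v) A C) = (\<Prod>j<d. card (Gset u v (split d j A) (split d j C)))"
proof -
  let ?G = "Gset (d * u) (d * v) A C"
  let ?P = "Pi\<^sub>E {..<d} (\<lambda>j. Gset u v (split d j A) (split d j C))"
  let ?f = "\<lambda>X. restrict (\<lambda>j. split d j X) {..<d}"
  let ?g = "\<lambda>F. {x. x div d \<in> F (x mod d)}"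
  have l: "lcm (d * u) (d * v) = d * lcm u v" by (simp add: lcm_mult_left)
  have memG: "X \<in> ?G \<longleftrightarrow> (\<forall>j<d. split d j X \<in> Gset u v (split d j A) (split d j C))" for X
  proof -
    have "push (d * u) X = A \<longleftrightarrow> (\<forall>j<d. push u (split d j X) = split d j A)"
      using split_eq_iff[OF d, of "push (d * u) X" A] split_push[OF d u] by simp
    moreover have "push (d * v) X = C \<longleftrightarrow> (\<forall>j<d. push v (split d j X) = split d j C)"
      using split_eq_iff[OF d, of "push (d * v) X" C] split_push[OF d v] by simp
    moreover note finite_split_iff[OF d, of X] closed_split_iff[OF d, of "lcm u v" X]
    ultimately show ?thesis unfolding Gset_def l mem_Collect_eq by blast
  qed
  have gf: "X = ?g (?f X)" for X
    by (rule split_eq_iff[OF d, THEN iffD2]) (use split_join[of _ d "\<lambda>j. split d j X"] in simp)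
  have "bij_betw ?f ?G ?P"
  proof (rule bij_betw_byWitness[where f'="?g"])
    show "\<forall>a\<in>?G. ?g (?f a) = a" using gf by simp
    show "\<forall>a'\<in>?P. ?f (?g a') = a'"
    proof
      fix F assume F: "F \<in> ?P"
      show "?f (?g F) = F"
      proof
        fix j show "?f (?g F) j = F j" using F split_join[of j d F] by (cases "j < d") auto
      qed
    qed
    show "?f ` ?G \<subseteq> ?P" using memG by auto
    show "?g ` ?P \<subseteq> ?G"
    proof
      fix X assume "X \<in> ?g ` ?P"
      then obtain F where F: "F \<in> ?P" "X = ?g F" by blast
      then show "X \<in> ?G" using memG split_join by auto
    qed
  qed
  then have "card ?G = card ?P" by (rule bij_betw_same_card)
  also have "\<dots> = (\<Prod>j<d. card (Gset u v (split d j A) (split d j C)))" by (simp add: card_PiE)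
  finally show ?thesis .
qed

lemma split_shift:
  assumes "j < d"
  shows "split d j ((\<lambda>x. x + d * e) ` X \<union> {..<d * e}) = (\<lambda>y. y + e) ` split d j X \<union> {..<e}"
proof (intro set_eqI iffI)
  fix y assume y: "y \<in> split d j ((\<lambda>x. x + d * e) ` X \<union> {..<d * e})"
  show "y \<in> (\<lambda>y. y + e) ` split d j X \<union> {..<e}"
  proof (cases "y < e")
    case False
    have "d * e \<le> d * y" using False by (simp add: mult_le_mono2)
    then have "\<not> d * y + j < d * e" by linarith
    then obtain x where x: "x \<in> X" "d * y + j = x + d * e" using y by (auto simp: split_def)
    then have "x = d * (y - e) + j" using False by (simp add: diff_mult_distrib2)
    then show ?thesis using x False by (intro UnI1 image_eqI[of _ _ "y - e"]) (auto simp: split_def)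
  qed simp
next
  fix y assume y: "y \<in> (\<lambda>y. y + e) ` split d j X \<union> {..<e}"
  show "y \<in> split d j ((\<lambda>x. x + d * e) ` X \<union> {..<d * e})"
  proof (cases "y < e")
    case True
    have "d * y + j < d * Suc y" using assms by simp
    also have "d * Suc y \<le> d * e" using True by (intro mult_le_mono2) simp
    finally have "d * y + j < d * e" .
    then show ?thesis by (simp add: split_def)
  next
    case False
    then obtain w where "w \<in> split d j X" "y = w + e" using y by auto
    then show ?thesis by (auto simp: split_def algebra_simps intro!: image_eqI[of _ _ "d * w + j"])
  qed
qed



lemma card_split_push:
  assumes d: "0 < d" and j: "j < d" and fin: "finite X"
  shows "card (split d j (push d X)) = card (split d j X)"
proof -
  have "split d j (push (d * 1) X) = push 1 (split d j X)" by (rule split_push[OF d _ j]) simp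
  moreover have "finite (split d j X)" using finite_split_iff[OF d] fin j by blast
  ultimately show ?thesis using card_push[of 1] by simp
qed

theorem theorem17:
  fixes s t :: nat and \<sigma> \<tau> :: "nat list"
  assumes "0 < s" and "0 < t"
    and "is_core s \<sigma>" and "is_core t \<tau>"
    and "core (gcd s t) \<sigma> = core (gcd s t) \<tau>"
  shows "\<forall>i \<ge> max (length \<sigma>) (length \<tau>).
           \<exists>\<sigma>' \<tau>' :: nat \<Rightarrow> nat list. \<exists>len' :: nat \<Rightarrow> nat.
             (\<forall>j < gcd s t. is_core (s div gcd s t) (\<sigma>' j) \<and> is_core (t div gcd s t) (\<tau>' j)) \<and>
             (\<forall>k. N_count s t \<sigma> \<tau> (i + lcm s t * k) =
                  (\<Prod>j<gcd s t. N_count (s div gcd s t) (t div gcd s t) (\<sigma>' j) (\<tau>' j)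
                                  (len' j + (lcm s t div gcd s t) * k)))"
proof (intro allI impI)
  fix i assume hi: "max (length \<sigma>) (length \<tau>) \<le> i"
  have s0: "0 < s" and t0: "0 < t" using assms by auto
  define d where "d = gcd s t"
  have d0: "0 < d" using s0 by (simp add: d_def)
  define s' where "s' = s div d"
  define t' where "t' = t div d"
  have sd: "s = d * s'" unfolding s'_def d_def by simp
  have td: "t = d * t'" unfolding t'_def d_def by simp
  have s'0: "0 < s'" using sd s0 by (cases s') auto
  have t'0: "0 < t'" using td t0 by (cases t') auto
  define m' where "m' = lcm s' t'"
  have lc: "lcm s t = d * m'" unfolding m'_def using sd td by (simp add: lcm_mult_left)
  have lcd: "lcm s t div d = m'" using lc d0 by simp
  have ps: "partition \<sigma>" and pt: "partition \<tau>" using assms(3,4) by (auto simp: is_core_def)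
  have ls: "length \<sigma> \<le> i" and lt: "length \<tau> \<le> i" using hi by auto
  define Bs where "Bs = beads i (part \<sigma>)"
  define Bt where "Bt = beads i (part \<tau>)"
  have cls: "closed s Bs" using is_core_beads[OF ps ls s0] assms(3) Bs_def by simp
  have clt: "closed t Bt" using is_core_beads[OF pt lt t0] assms(4) Bt_def by simp
  have pd: "push d Bs = push d Bt"
    using core_beads[OF d0 ps ls] core_beads[OF d0 pt lt] assms(5) unfolding Bs_def Bt_def d_def by simp
  define A where "A j = split d j Bs" for j
  define C where "C j = split d j Bt" for j
  define n where "n j = card (A j)" for j
  have finA: "j < d \<Longrightarrow> finite (A j)" for j
    using finite_split_iff[OF d0, of Bs] finite_beads unfolding A_def Bs_def by blast
  have finC: "j < d \<Longrightarrow> finite (C j)" for j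
    using finite_split_iff[OF d0, of Bt] finite_beads unfolding C_def Bt_def by blast
  have cardC: "j < d \<Longrightarrow> card (C j) = n j" for j
    using card_split_push[OF d0 _ finite_beads, of j i "part \<sigma>"] card_split_push[OF d0 _ finite_beads, of j i "part \<tau>"]
      pd unfolding n_def A_def C_def Bs_def Bt_def by simp
  define \<sigma>' where "\<sigma>' j = (SOME lam. partition lam \<and> length lam \<le> n j \<and> beads (n j) (part lam) = A j)" for j
  define \<tau>' where "\<tau>' j = (SOME lam. partition lam \<and> length lam \<le> n j \<and> beads (n j) (part lam) = C j)" for j
  have sig: "partition (\<sigma>' j) \<and> length (\<sigma>' j) \<le> n j \<and> beads (n j) (part (\<sigma>' j)) = A j" if "j < d" for j
    unfolding \<sigma>'_def by (rule someI_ex) (rule beads_exist[OF finA[OF that]], simp add: n_def)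
  have tau: "partition (\<tau>' j) \<and> length (\<tau>' j) \<le> n j \<and> beads (n j) (part (\<tau>' j)) = C j" if "j < d" for j
    unfolding \<tau>'_def by (rule someI_ex) (rule beads_exist[OF finC[OF that] cardC[OF that]])
  have core1: "is_core s' (\<sigma>' j) \<and> is_core t' (\<tau>' j)" if "j < d" for j
  proof
    have "closed s' (A j)" using cls closed_split_iff[OF d0, of s' Bs] sd that A_def by simp
    then show "is_core s' (\<sigma>' j)" using is_core_beads[of "\<sigma>' j" "n j" s'] sig[OF that] s'0 by simp
    have "closed t' (C j)" using clt closed_split_iff[OF d0, of t' Bt] td that C_def by simp
    then show "is_core t' (\<tau>' j)" using is_core_beads[of "\<tau>' j" "n j" t'] tau[OF that] t'0 by simp
  qed
  have main: "N_count s t \<sigma> \<tau> (i + lcm s t * k) =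
      (\<Prod>j<d. N_count s' t' (\<sigma>' j) (\<tau>' j) (n j + m' * k))" for k
  proof -
    define e where "e = m' * k"
    define L where "L = i + d * e"
    have Le: "i + lcm s t * k = L" unfolding L_def e_def lc by (simp add: mult.assoc)
    have bs: "beads L (part \<sigma>) = (\<lambda>x. x + d * e) ` Bs \<union> {..<d * e}"
      unfolding L_def Bs_def by (rule beads_shift) (simp add: part0[OF ls])
    have bt: "beads L (part \<tau>) = (\<lambda>x. x + d * e) ` Bt \<union> {..<d * e}"
      unfolding L_def Bt_def by (rule beads_shift) (simp add: part0[OF lt])
    have "N_count s t \<sigma> \<tau> L = card (Gset s t (beads L (part \<sigma>)) (beads L (part \<tau>)))"
      by (rule N_to_G[OF s0 t0 ps _ pt]) (use ls lt L_def in auto)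
    also have "\<dots> = card (Gset (d * s') (d * t') (beads L (part \<sigma>)) (beads L (part \<tau>)))"
      using sd td by simp
    also have "\<dots> = (\<Prod>j<d. card (Gset s' t' (split d j (beads L (part \<sigma>))) (split d j (beads L (part \<tau>)))))"
      by (rule card_Gset_split[OF d0 s'0 t'0])
    also have "\<dots> = (\<Prod>j<d. N_count s' t' (\<sigma>' j) (\<tau>' j) (n j + e))"
    proof (rule prod.cong[OF refl])
      fix j assume "j \<in> {..<d}"
      then have j: "j < d" by simp
      have e1: "split d j (beads L (part \<sigma>)) = beads (n j + e) (part (\<sigma>' j))"
      proof -
        have "split d j (beads L (part \<sigma>)) = (\<lambda>y. y + e) ` A j \<union> {..<e}"
          unfolding bs A_def by (rule split_shift[OF j])
        also have "\<dots> = beads (n j + e) (part (\<sigma>' j))"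
        proof -
          have "\<And>r. n j \<le> r \<Longrightarrow> part (\<sigma>' j) r = 0" using sig[OF j] part0 by blast
          then show ?thesis using beads_shift[of "n j" "part (\<sigma>' j)" e] sig[OF j] by simp
        qed
        finally show ?thesis .
      qed
      have e2: "split d j (beads L (part \<tau>)) = beads (n j + e) (part (\<tau>' j))"
      proof -
        have "split d j (beads L (part \<tau>)) = (\<lambda>y. y + e) ` C j \<union> {..<e}"
          unfolding bt C_def by (rule split_shift[OF j])
        also have "\<dots> = beads (n j + e) (part (\<tau>' j))"
        proof -
          have "\<And>r. n j \<le> r \<Longrightarrow> part (\<tau>' j) r = 0" using tau[OF j] part0 by blast
          then show ?thesis using beads_shift[of "n j" "part (\<tau>' j)" e] tau[OF j] by simp
        qed
        finally show ?thesis .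
      qed
      show "card (Gset s' t' (split d j (beads L (part \<sigma>))) (split d j (beads L (part \<tau>)))) =
            N_count s' t' (\<sigma>' j) (\<tau>' j) (n j + e)"
        unfolding e1 e2 using sig[OF j] tau[OF j]
        by (intro N_to_G[symmetric] s'0 t'0) auto
    qed
    finally show ?thesis using Le e_def by simp
  qed
  show "\<exists>\<sigma>' \<tau>' :: nat \<Rightarrow> nat list. \<exists>len' :: nat \<Rightarrow> nat.
             (\<forall>j < gcd s t. is_core (s div gcd s t) (\<sigma>' j) \<and> is_core (t div gcd s t) (\<tau>' j)) \<and>
             (\<forall>k. N_count s t \<sigma> \<tau> (i + lcm s t * k) =
                  (\<Prod>j<gcd s t. N_count (s div gcd s t) (t div gcd s t) (\<sigma>' j) (\<tau>' j)
                                  (len' j + (lcm s t div gcd s t) * k)))"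
    apply (rule exI[of _ \<sigma>'], rule exI[of _ \<tau>'], rule exI[of _ n])
    using core1 main lcd unfolding d_def[symmetric] s'_def[symmetric] t'_def[symmetric] by simp
qed

end
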